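(* Let $n,N\in\mathbb{N}$, let $\Omega\subseteq\mathbb{R}^n$ be open and let $\mathrm{H}\in C^2(\Omega\times\mathbb{R}^N\times\mathbb{R}^{N\times n})$, $\mathrm{H}=\mathrm{H}(x,\eta,P)$. Let $u\in C^2(\Omega;\mathbb{R}^N)$ solve \[ \mathrm{H}_P(\cdot,u,\mathrm{D}u)\,\mathrm{D}\big(\mathrm{H}(\cdot,u,\mathrm{D}u)\big)=0\quad\text{on }\Omega, \] and assume that (a) the $N\times n$ matrix field $\mathrm{H}_P(\cdot,u,\mathrm{D}u)$ has full rank on $\Omega$, and (b) there exists $c>0$ such that \[ \big(\xi^\top\mathrm{H}_P(x,\eta,P)\big)\cdot\big(\xi^\top P\big)\ \ge\ c\,\big|\xi^\top\mathrm{H}_P(x,\eta,P)\big|^2 \] for all $\xi\in\mathbb{R}^N$ and all $(x,\eta,P)\in\Omega\times\mathbb{R}^N\times\mathbb{R}^{N\times n}$. Then for every open set $\mathcal{O}\Subset\Omega$, \[ \sup_{\mathcal{O}}\mathrm{H}(\cdot,u,\mathrm{D}u)=\max_{\partial\mathcal{O}}\mathrm{H}(\cdot,u,\mathrm{D}u),\qquad \inf_{\mathcal{O}}\mathrm{H}(\cdot,u,\mathrm{D}u)=\min_{\partial\mathcal{O}}\mathrm{H}(\cdot,u,\mathrm{D}u). \]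
   Context: $\mathrm{D}u$ is the $N\times n$ gradient matrix of $u$; $\mathrm{H}_P$ is the derivative of $\mathrm{H}$ with respect to $P\in\mathbb{R}^{N\times n}$, an $N\times n$ matrix; $\mathrm{H}_P(\cdot,u,\mathrm{D}u)\,\mathrm{D}(\mathrm{H}(\cdot,u,\mathrm{D}u))$ is the matrix–vector product of this matrix with the gradient of the scalar function $x\mapsto\mathrm{H}(x,u(x),\mathrm{D}u(x))$. For $\xi\in\mathbb{R}^N$, $\xi^\top A\in\mathbb{R}^n$ for an $N\times n$ matrix $A$, and "$\cdot$" is the Euclidean inner product. *)

theory Defs
  imports "HOL-Analysis.Analysis"
begin

definition C1_on :: "'a::real_normed_vector set \<Rightarrow> ('a \<Rightarrow> 'b::real_normed_vector) \<Rightarrow> bool" where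
  "C1_on S f \<longleftrightarrow> (\<exists>f'. (\<forall>x\<in>S. (f has_derivative blinfun_apply (f' x)) (at x)) \<and> continuous_on S f')"

definition C2_on :: "'a::real_normed_vector set \<Rightarrow> ('a \<Rightarrow> 'b::real_normed_vector) \<Rightarrow> bool" where
  "C2_on S f \<longleftrightarrow> (\<exists>f'. (\<forall>x\<in>S. (f has_derivative blinfun_apply (f' x)) (at x)) \<and> C1_on S f')"

text \<open>Gradient matrix Du (N x n): (Du x) $ i $ j = d u_i / d x_j.\<close>
definition Dmat :: "(real^'n \<Rightarrow> real^'N) \<Rightarrow> real^'n \<Rightarrow> real^'n^'N" where
  "Dmat u x = matrix (frechet_derivative u (at x))"

definition grad :: "(real^'n \<Rightarrow> real) \<Rightarrow> real^'n \<Rightarrow> real^'n" where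
  "grad h x = (\<chi> j. frechet_derivative h (at x) (axis j 1))"

definition HP :: "((real^'n) \<times> (real^'N) \<times> (real^'n^'N) \<Rightarrow> real) \<Rightarrow> real^'n \<Rightarrow> real^'N \<Rightarrow> real^'n^'N \<Rightarrow> real^'n^'N" where
  "HP H x \<eta> P = (\<chi> i j. frechet_derivative (\<lambda>Q. H (x, \<eta>, Q)) (at P)
                          (\<chi> k l. if k = i \<and> l = j then 1 else 0))"

end

theory Submission
  imports Defs
begin

lemma maxp:
  fixes h g :: "'a::euclidean_space \<Rightarrow> real" and U :: "'a set"
  assumes U: "open U" "U \<noteq> {}" "compact (closure U)"
    and ch: "continuous_on (closure U) h" and cg: "continuous_on (closure U) g"
    and D: "\<forall>x\<in>U. \<exists>h' g' w. (h has_derivative h') (at x) \<and> (g has_derivative g') (at x) \<and> h' w = 0 \<and> g' w > 0"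
  shows "\<exists>y\<in>frontier U. (\<forall>z\<in>frontier U. h z \<le> h y) \<and> (SUP x\<in>U. h x) = h y"
proof -
  define K where "K = closure U"
  have K: "compact K" "K \<noteq> {}" using U by (auto simp: K_def)
  have "U \<noteq> UNIV"
  proof
    assume "U = UNIV"
    then have "bounded (UNIV :: 'a set)" using U(3) compact_imp_bounded by fastforce
    then show False by simp
  qed
  then have Fne: "frontier U \<noteq> {}" using U(2) frontier_eq_empty by blast
  have FK: "frontier U \<subseteq> K" by (simp add: K_def frontier_def)
  have "K \<inter> frontier U = frontier U" using FK by blast
  then have Fc: "compact (frontier U)" using compact_Int_closed[OF K(1) frontier_closed[of U]] by simp
  obtain x0 where x0: "x0 \<in> K" "\<forall>x\<in>K. h x \<le> h x0"
    using continuous_attains_sup[OF K, of h] ch K_def by auto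
  obtain y where y: "y \<in> frontier U" "\<forall>z\<in>frontier U. h z \<le> h y"
    using continuous_attains_sup[OF Fc Fne, of h] continuous_on_subset[OF ch] FK K_def by auto
  obtain g1 where g1: "\<forall>x\<in>K. g x \<le> g1"
    using continuous_attains_sup[OF K, of g] cg K_def by auto
  obtain g0 where g0: "\<forall>x\<in>K. g0 \<le> g x"
    using continuous_attains_inf[OF K, of g] cg K_def by auto
  have main: "h x0 \<le> h y"
  proof (rule ccontr)
    assume "\<not> h x0 \<le> h y"
    then have lt: "h y < h x0" by simp
    have g01: "g0 \<le> g1" using g0 g1 x0 by force
    define e where "e = (h x0 - h y) / (2 * (g1 - g0 + 1))"
    have e: "e > 0" using lt g01 by (simp add: e_def)
    have eb: "e * (g1 - g0) < h x0 - h y"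
    proof -
      have "e * (g1 - g0) \<le> e * (g1 - g0 + 1)" using e by simp
      also have "\<dots> = (h x0 - h y) / 2" using g01 unfolding e_def by (simp add: divide_simps) 
      finally show ?thesis using lt by simp
    qed
    have cf: "continuous_on K (\<lambda>x. h x + e * g x)"
      using ch cg K_def by (intro continuous_intros) auto
    obtain x1 where x1: "x1 \<in> K" "\<forall>x\<in>K. h x + e * g x \<le> h x1 + e * g x1"
      using continuous_attains_sup[OF K cf] by auto
    have "x1 \<notin> frontier U"
    proof
      assume "x1 \<in> frontier U"
      then have a1: "h x1 \<le> h y" "g x1 \<le> g1" using y(2) g1 FK by auto
      have "e * g x1 \<le> e * g1" using a1(2) e by (simp add: mult_left_mono)
      then have "h x1 + e * g x1 \<le> h y + e * g1" using a1(1) by linarith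
      also have "\<dots> < h x0 + e * g0" using eb by (simp add: algebra_simps)
      also have "\<dots> \<le> h x0 + e * g x0" using g0 x0 e by (simp add: mult_left_mono)
      moreover have "h x0 + e * g x0 \<le> h x1 + e * g x1" using x1(2) x0(1) by blast
      ultimately show False by linarith
    qed
    then have "x1 \<in> U" using x1 U(1) by (simp add: K_def frontier_def interior_open)
    then obtain h' g' w where hw: "(h has_derivative h') (at x1)" "(g has_derivative g') (at x1)"
       "h' w = 0" "g' w > 0" using D by blast
    have "((\<lambda>x. h x + e * g x) has_derivative (\<lambda>v. h' v + e * g' v)) (at x1)"
      by (intro derivative_intros hw)
    moreover have "\<forall>z\<in>U. h z + e * g z \<le> h x1 + e * g x1" using x1 K_def closure_subset by blast
    ultimately have "(\<lambda>v. h' v + e * g' v) = (\<lambda>v. 0)"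
      using differential_zero_maxmin[OF \<open>x1 \<in> U\<close> U(1)] by blast
    from fun_cong[OF this, of w] have "h' w + e * g' w = 0" by simp
    then show False using hw e by simp
  qed
  have UK: "U \<subseteq> K" by (simp add: K_def closure_subset)
  have hx0: "h x \<le> h x0" if "x \<in> U" for x using x0(2) UK that by blast
  have bdd: "bdd_above (h ` U)" by (rule bdd_aboveI2[where M="h x0"]) (rule hx0)
  have "(SUP x\<in>U. h x) = h y"
  proof (rule antisym)
    show "(SUP x\<in>U. h x) \<le> h y"
    proof (rule cSUP_least[OF U(2)])
      fix x assume "x \<in> U" then show "h x \<le> h y" using hx0 main by (meson order_trans)
    qed
    have "h ` closure U \<subseteq> {..(SUP x\<in>U. h x)}"
    proof (rule image_closure_subset[OF ch])
      show "closed {..(SUP x\<in>U. h x)}" by simp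
      show "h ` U \<subseteq> {..(SUP x\<in>U. h x)}"
      proof
        fix t assume "t \<in> h ` U"
        then obtain x where "x \<in> U" "t = h x" by blast
        then show "t \<in> {..(SUP x\<in>U. h x)}" using cSUP_upper[OF _ bdd, of x] by simp
      qed
    qed
    moreover have "y \<in> closure U" using y(1) FK K_def by blast
    ultimately show "h y \<le> (SUP x\<in>U. h x)" by blast
  qed
  then show ?thesis using y by blast
qed

lemma grad_inner:
  fixes f :: "real^'n \<Rightarrow> real"
  assumes "linear f"
  shows "(\<chi> j. f (axis j 1)) \<bullet> w = f w"
proof -
  have "f w = f (\<Sum>i\<in>UNIV. w$i *\<^sub>R axis i 1)"
    using basis_expansion[of w] by (simp add: scalar_mult_eq_scaleR)
  also have "\<dots> = (\<Sum>i\<in>UNIV. w$i * f (axis i 1))"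
    using assms by (simp add: linear_sum linear_scale)
  finally show ?thesis by (simp add: inner_vec_def mult.commute)
qed

lemma bl_matrix:
  "bounded_linear (\<lambda>B::((real^'n) \<Rightarrow>\<^sub>L (real^'m)). matrix (blinfun_apply B))"
proof (rule bounded_linear_intro[where K = "real CARD('m) * real CARD('n)"])
  fix B C :: "(real^'n) \<Rightarrow>\<^sub>L (real^'m)" and r :: real
  show "matrix (blinfun_apply (B + C)) = matrix (blinfun_apply B) + matrix (blinfun_apply C)"
    by (simp add: matrix_def vec_eq_iff blinfun.add_left)
  show "matrix (blinfun_apply (r *\<^sub>R B)) = r *\<^sub>R matrix (blinfun_apply B)"
    by (simp add: matrix_def vec_eq_iff blinfun.scaleR_left)
  have "norm (matrix (blinfun_apply B)) \<le> (\<Sum>i\<in>UNIV. norm (matrix (blinfun_apply B) $ i))"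
    unfolding norm_vec_def by (rule L2_set_le_sum) simp
  also have "\<dots> \<le> (\<Sum>i\<in>(UNIV::'m set). \<Sum>j\<in>(UNIV::'n set). norm B)"
  proof (rule sum_mono)
    fix i
    have "norm (matrix (blinfun_apply B) $ i) \<le> (\<Sum>j\<in>UNIV. \<bar>matrix (blinfun_apply B) $ i $ j\<bar>)"
      by (rule norm_le_l1_cart)
    also have "\<dots> \<le> (\<Sum>j\<in>(UNIV::'n set). norm B)"
    proof (rule sum_mono)
      fix j
      have "\<bar>matrix (blinfun_apply B) $ i $ j\<bar> = \<bar>blinfun_apply B (axis j 1) $ i\<bar>"
        by (simp add: matrix_def)
      also have "\<dots> \<le> norm (blinfun_apply B (axis j 1))" by (rule component_le_norm_cart)
      also have "\<dots> \<le> norm B * norm (axis j (1::real))" by (rule norm_blinfun)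
      finally show "\<bar>matrix (blinfun_apply B) $ i $ j\<bar> \<le> norm B" by simp
    qed
    finally show "norm (matrix (blinfun_apply B) $ i) \<le> (\<Sum>j\<in>(UNIV::'n set). norm B)" .
  qed
  also have "\<dots> = norm B * (real CARD('m) * real CARD('n))" by simp
  finally show "norm (matrix (blinfun_apply B)) \<le> norm B * (real CARD('m) * real CARD('n))" .
qed

theorem proposition6:
  fixes \<Omega> :: "(real^'n) set"
    and H :: "(real^'n) \<times> (real^'N) \<times> (real^'n^'N) \<Rightarrow> real"
    and u :: "real^'n \<Rightarrow> real^'N"
    and c :: real
  assumes "open \<Omega>"
    and "C2_on (\<Omega> \<times> UNIV \<times> UNIV) H"
    and "C2_on \<Omega> u"
    and "\<forall>x\<in>\<Omega>. HP H x (u x) (Dmat u x) *v grad (\<lambda>y. H (y, u y, Dmat u y)) x = 0"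
    and "\<forall>x\<in>\<Omega>. rank (HP H x (u x) (Dmat u x)) = min CARD('N) CARD('n)"
    and "c > 0"
    and "\<forall>\<xi>::real^'N. \<forall>x\<in>\<Omega>. \<forall>\<eta> P.
           (\<xi> v* HP H x \<eta> P) \<bullet> (\<xi> v* P) \<ge> c * (norm (\<xi> v* HP H x \<eta> P))\<^sup>2"
  shows "\<forall>U. open U \<and> U \<noteq> {} \<and> compact (closure U) \<and> closure U \<subseteq> \<Omega> \<longrightarrow>
           (\<exists>y\<in>frontier U. (\<forall>z\<in>frontier U. H (z, u z, Dmat u z) \<le> H (y, u y, Dmat u y))
                \<and> (SUP x\<in>U. H (x, u x, Dmat u x)) = H (y, u y, Dmat u y))
         \<and> (\<exists>y\<in>frontier U. (\<forall>z\<in>frontier U. H (y, u y, Dmat u y) \<le> H (z, u z, Dmat u z))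
                \<and> (INF x\<in>U. H (x, u x, Dmat u x)) = H (y, u y, Dmat u y))"
  proof (intro allI impI)
  fix U :: "(real^'n) set"
  assume UA: "open U \<and> U \<noteq> {} \<and> compact (closure U) \<and> closure U \<subseteq> \<Omega>"
  define h where "h = (\<lambda>y. H (y, u y, Dmat u y))"
  obtain H' where H': "\<forall>p\<in>\<Omega> \<times> UNIV \<times> UNIV. (H has_derivative blinfun_apply (H' p)) (at p)"
    using assms(2) unfolding C2_on_def by blast
  obtain u' u'' where u': "\<forall>x\<in>\<Omega>. (u has_derivative blinfun_apply (u' x)) (at x)"
    and u'': "\<forall>x\<in>\<Omega>. (u' has_derivative blinfun_apply (u'' x)) (at x)"
    using assms(3) unfolding C2_on_def C1_on_def by blast
  have Dm: "Dmat u y = matrix (blinfun_apply (u' y))" if "y \<in> \<Omega>" for y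
  proof -
    have "blinfun_apply (u' y) = frechet_derivative u (at y)"
      by (rule frechet_derivative_at) (use u' that in blast)
    then show ?thesis unfolding Dmat_def by simp
  qed
  have hder: "h differentiable (at x)" if x: "x \<in> \<Omega>" for x
  proof -
    have d1: "((\<lambda>y. matrix (blinfun_apply (u' y))) has_derivative
        (\<lambda>v. matrix (blinfun_apply (blinfun_apply (u'' x) v)))) (at x)"
      using bounded_linear.has_derivative[OF bl_matrix u''[rule_format, OF x]] .
    have d2: "(Dmat u has_derivative
        (\<lambda>v. matrix (blinfun_apply (blinfun_apply (u'' x) v)))) (at x)"
      by (rule has_derivative_transform_within_open[OF d1 assms(1) x]) (simp add: Dm)
    have d3: "((\<lambda>y. (y, u y, Dmat u y)) has_derivative
        (\<lambda>v. (v, blinfun_apply (u' x) v, matrix (blinfun_apply (blinfun_apply (u'' x) v))))) (at x)"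
      by (intro has_derivative_Pair has_derivative_ident u'[rule_format, OF x] d2)
    have "(H has_derivative blinfun_apply (H' (x, u x, Dmat u x))) (at (x, u x, Dmat u x))"
      using H' x by auto
    from has_derivative_compose[OF d3 this] show ?thesis
      unfolding h_def differentiable_def by blast
  qed
  have hgrad: "frechet_derivative h (at x) w = grad h x \<bullet> w" if x: "x \<in> \<Omega>" for x w
  proof -
    have "linear (frechet_derivative h (at x))"
      using frechet_derivative_works hder[OF x] has_derivative_linear by blast
    then show ?thesis unfolding grad_def by (simp add: grad_inner)
  qed
  have hcont: "continuous_on \<Omega> h"
    by (intro continuous_at_imp_continuous_on ballI differentiable_imp_continuous_within hder)
  have ucont: "continuous_on \<Omega> u"
    by (intro continuous_at_imp_continuous_on ballI has_derivative_continuous[of u "blinfun_apply (u' _)"]) (use u' in blast)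
  have eq0: "HP H x (u x) (Dmat u x) *v grad h x = 0" if "x \<in> \<Omega>" for x
    using assms(4) that unfolding h_def by blast
  have key: "\<exists>g::real^'n \<Rightarrow> real. continuous_on \<Omega> g \<and> (\<forall>x\<in>\<Omega>. \<exists>g' w. (g has_derivative g') (at x)
      \<and> frechet_derivative h (at x) w = 0 \<and> g' w > 0)"
  proof (cases "CARD('N) \<le> CARD('n)")
    case True
    define \<xi> where "\<xi> = (axis undefined 1 :: real^'N)"
    have \<xi>0: "\<xi> \<noteq> 0" unfolding \<xi>_def by (simp add: axis_eq_0_iff)
    have c: "continuous_on \<Omega> (\<lambda>y. \<xi> \<bullet> u y)" using ucont by (intro continuous_intros)
    have d: "\<forall>x\<in>\<Omega>. \<exists>g' w. ((\<lambda>y. \<xi> \<bullet> u y) has_derivative g') (at x)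
          \<and> frechet_derivative h (at x) w = 0 \<and> g' w > 0"
    proof
      fix x assume x: "x \<in> \<Omega>"
      define A where "A = HP H x (u x) (Dmat u x)"
      define w where "w = \<xi> v* A"
      have "rank (transpose A) = CARD('N)"
        using assms(5) x True unfolding A_def by (simp add: rank_transpose)
      then have "inj ((*v) (transpose A))" by (simp add: full_rank_injective)
      then have "transpose A *v \<xi> \<noteq> transpose A *v 0" using \<xi>0 by (meson injD)
      then have w0: "w \<noteq> 0" unfolding w_def by simp
      have gd: "((\<lambda>y. \<xi> \<bullet> u y) has_derivative (\<lambda>v. \<xi> \<bullet> blinfun_apply (u' x) v)) (at x)"
        using bounded_linear.has_derivative[OF bounded_linear_inner_right u'[rule_format, OF x]] .

      have "frechet_derivative h (at x) w = grad h x \<bullet> w" using hgrad x by blast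
      also have "\<dots> = \<xi> \<bullet> (A *v grad h x)" using dot_lmul_matrix[of \<xi> A "grad h x"] inner_commute[of "grad h x" w] w_def by simp
      also have "\<dots> = 0" using eq0 x A_def by simp
      finally have h0: "frechet_derivative h (at x) w = 0" .
      have mv: "(\<lambda>v. matrix (blinfun_apply (u' x)) *v v) = blinfun_apply (u' x)"
        by (rule matrix_vector_mul(3)) (rule blinfun.bounded_linear_right)
      have "blinfun_apply (u' x) w = Dmat u x *v w"
        using fun_cong[OF mv, of w] Dm[OF x] by simp
      then have "\<xi> \<bullet> blinfun_apply (u' x) w = w \<bullet> (\<xi> v* Dmat u x)"
        using dot_lmul_matrix[of \<xi> "Dmat u x" w] inner_commute[of w "\<xi> v* Dmat u x"] by simp
      also have "\<dots> \<ge> c * (norm w)\<^sup>2"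
        using assms(7) x unfolding w_def A_def by blast
      finally have ge: "\<xi> \<bullet> blinfun_apply (u' x) w \<ge> c * (norm w)\<^sup>2" .
      have "c * (norm w)\<^sup>2 > 0" using w0 assms(6) by simp
      then have "\<xi> \<bullet> blinfun_apply (u' x) w > 0" using ge by linarith
      with gd h0 show "\<exists>g' w. ((\<lambda>y. \<xi> \<bullet> u y) has_derivative g') (at x)
          \<and> frechet_derivative h (at x) w = 0 \<and> g' w > 0" by blast
    qed
    show ?thesis using c d by blast
  next
    case False
    define e where "e = (axis undefined 1 :: real^'n)"
    have e0: "e \<noteq> 0" unfolding e_def by (simp add: axis_eq_0_iff)
    have c: "continuous_on \<Omega> (\<lambda>y. e \<bullet> y)" by (intro continuous_intros)
    have d: "\<forall>x\<in>\<Omega>. \<exists>g' w. ((\<lambda>y. e \<bullet> y) has_derivative g') (at x)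
          \<and> frechet_derivative h (at x) w = 0 \<and> g' w > 0"
    proof
      fix x assume x: "x \<in> \<Omega>"
      define A where "A = HP H x (u x) (Dmat u x)"
      have "rank A = CARD('n)"
        using assms(5) x False unfolding A_def by simp
      then have "inj ((*v) A)" by (simp add: full_rank_injective)
      moreover have "A *v grad h x = A *v 0" using eq0 x A_def by simp
      ultimately have "grad h x = 0" by (meson injD)
      then have h0: "frechet_derivative h (at x) e = 0" using hgrad x by simp
      have gd: "((\<lambda>y. e \<bullet> y) has_derivative (\<lambda>v. e \<bullet> v)) (at x)"
        using bounded_linear.has_derivative[OF bounded_linear_inner_right has_derivative_ident] .
      have "e \<bullet> e > 0" using e0 by simp
      with gd h0 show "\<exists>g' w. ((\<lambda>y. e \<bullet> y) has_derivative g') (at x)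
          \<and> frechet_derivative h (at x) w = 0 \<and> g' w > 0" by blast
    qed
    show ?thesis using c d by blast
  qed
  then obtain g :: "real^'n \<Rightarrow> real" where g: "continuous_on \<Omega> g" and gD: "\<forall>x\<in>\<Omega>. \<exists>g' w. (g has_derivative g') (at x)
      \<and> frechet_derivative h (at x) w = 0 \<and> g' w > 0" by blast
  have UO: "U \<subseteq> \<Omega>" using UA closure_subset by blast
  have chU: "continuous_on (closure U) h" using hcont UA continuous_on_subset by blast
  have cgU: "continuous_on (closure U) g" using g UA continuous_on_subset by blast
  have D1: "\<forall>x\<in>U. \<exists>h' g' w. (h has_derivative h') (at x) \<and> (g has_derivative g') (at x) \<and> h' w = 0 \<and> g' w > 0"
  proof
    fix x assume "x \<in> U"
    then have x: "x \<in> \<Omega>" using UO by blast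
    obtain g' w where gw: "(g has_derivative g') (at x)" "frechet_derivative h (at x) w = 0" "g' w > 0"
      using gD x by blast
    have "(h has_derivative frechet_derivative h (at x)) (at x)"
      using hder[OF x] frechet_derivative_works by blast
    then show "\<exists>h' g' w. (h has_derivative h') (at x) \<and> (g has_derivative g') (at x) \<and> h' w = 0 \<and> g' w > 0"
      using gw by blast
  qed
  have D2: "\<forall>x\<in>U. \<exists>h' g' w. ((\<lambda>x. - h x) has_derivative h') (at x) \<and> (g has_derivative g') (at x) \<and> h' w = 0 \<and> g' w > 0"
  proof
    fix x assume "x \<in> U"
    then have x: "x \<in> \<Omega>" using UO by blast
    obtain g' w where gw: "(g has_derivative g') (at x)" "frechet_derivative h (at x) w = 0" "g' w > 0"
      using gD x by blast
    have "((\<lambda>x. - h x) has_derivative (\<lambda>v. - frechet_derivative h (at x) v)) (at x)"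
        by (intro has_derivative_minus) (use hder[OF x] frechet_derivative_works in blast)
    then show "\<exists>h' g' w. ((\<lambda>x. - h x) has_derivative h') (at x) \<and> (g has_derivative g') (at x) \<and> h' w = 0 \<and> g' w > 0"
      using gw by (intro exI[of _ "\<lambda>v. - frechet_derivative h (at x) v"] exI[of _ g'] exI[of _ w]) simp
  qed
  have U3: "open U" "U \<noteq> {}" "compact (closure U)" using UA by auto
  obtain y1 where y1: "y1 \<in> frontier U" "\<forall>z\<in>frontier U. h z \<le> h y1" "(SUP x\<in>U. h x) = h y1"
    using maxp[OF U3 chU cgU D1] by blast
  have chU2: "continuous_on (closure U) (\<lambda>x. - h x)" using chU by (intro continuous_intros)
  obtain y2 where y2: "y2 \<in> frontier U" "\<forall>z\<in>frontier U. - h z \<le> - h y2" "(SUP x\<in>U. - h x) = - h y2"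
    using maxp[OF U3 chU2 cgU D2] by blast
  have "(INF x\<in>U. h x) = - (SUP x\<in>U. - h x)"
    by (simp add: Inf_real_def image_image)
  then have "(INF x\<in>U. h x) = h y2" using y2 by simp
  then show "(\<exists>y\<in>frontier U. (\<forall>z\<in>frontier U. H (z, u z, Dmat u z) \<le> H (y, u y, Dmat u y))
                \<and> (SUP x\<in>U. H (x, u x, Dmat u x)) = H (y, u y, Dmat u y))
         \<and> (\<exists>y\<in>frontier U. (\<forall>z\<in>frontier U. H (y, u y, Dmat u y) \<le> H (z, u z, Dmat u z))
                \<and> (INF x\<in>U. H (x, u x, Dmat u x)) = H (y, u y, Dmat u y))"
  proof (intro conjI)
    show "\<exists>y\<in>frontier U. (\<forall>z\<in>frontier U. H (z, u z, Dmat u z) \<le> H (y, u y, Dmat u y))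
                \<and> (SUP x\<in>U. H (x, u x, Dmat u x)) = H (y, u y, Dmat u y)"
      using y1 unfolding h_def by blast
    show "\<exists>y\<in>frontier U. (\<forall>z\<in>frontier U. H (y, u y, Dmat u y) \<le> H (z, u z, Dmat u z))
                \<and> (INF x\<in>U. H (x, u x, Dmat u x)) = H (y, u y, Dmat u y)"
      using y2 \<open>(INF x\<in>U. h x) = h y2\<close> unfolding h_def by auto
  qed
qed

end
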